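(* Let $G$ be the group given by the presentation $P=\langle x_1,\ldots,x_n\mid r_1^{a_1},\ldots,r_m^{a_m}\rangle$, where each $r_i$ is an element of the free group $F_n$ on $x_1,\ldots,x_n$ that is not a proper power, and let $\varphi:F_n\to G$ be the canonical map. Suppose there exist a residually finite group $N$ and a homomorphism $\psi:G\to N$ such that the order of $\psi(\varphi(r_i))$ in $N$ is $a_i$ for all $1\le i\le m$. Then \[rdef(P)=n-\sum_{i=1}^m\frac1{a_i}.\]
   Context: For the presentation $P$, let $R_G$ be the finite residual of $G$ (intersection of all finite index subgroups) and $k_i$ the order of $\varphi(r_i)R_G$ in $G/R_G$; the residual deficiency of $P$ is $rdef(P)=n-\sum_{i=1}^m 1/k_i$. *)

theory Defs
  imports "HOL-Algebra.Algebra"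
begin

text \<open>A letter (i, True) stands for x_i, (i, False) for its inverse.\<close>
type_synonym fword = "(nat \<times> bool) list"

definition inv_letter :: "nat \<times> bool \<Rightarrow> nat \<times> bool" where
  "inv_letter l = (fst l, \<not> snd l)"

fun reduced :: "fword \<Rightarrow> bool" where
  "reduced [] = True"
| "reduced [a] = True"
| "reduced (a # b # w) = (b \<noteq> inv_letter a \<and> reduced (b # w))"

fun red :: "fword \<Rightarrow> fword" where
  "red [] = []"
| "red (a # w) = (case red w of [] \<Rightarrow> [a]
                   | b # v \<Rightarrow> (if b = inv_letter a then v else a # b # v))"

definition free_group :: "nat \<Rightarrow> fword monoid" where
  "free_group n = \<lparr> carrier = {w. set w \<subseteq> {..<n} \<times> UNIV \<and> reduced w},
                    monoid.mult = (\<lambda>u v. red (u @ v)),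
                    monoid.one = [] \<rparr>"

definition normal_closure :: "('a, 'b) monoid_scheme \<Rightarrow> 'a set \<Rightarrow> 'a set" where
  "normal_closure G S = generate G
     {g \<otimes>\<^bsub>G\<^esub> s \<otimes>\<^bsub>G\<^esub> inv\<^bsub>G\<^esub> g | g s. g \<in> carrier G \<and> s \<in> S}"

text \<open>The relators of P = < x_1..x_n | r_1^a_1, ..., r_m^a_m > (indexed 0..m-1).\<close>
definition pres_relators :: "nat \<Rightarrow> nat \<Rightarrow> (nat \<Rightarrow> fword) \<Rightarrow> (nat \<Rightarrow> nat) \<Rightarrow> fword set" where
  "pres_relators n m r a = {r i [^]\<^bsub>free_group n\<^esub> a i | i. i < m}"

definition pres_kernel :: "nat \<Rightarrow> nat \<Rightarrow> (nat \<Rightarrow> fword) \<Rightarrow> (nat \<Rightarrow> nat) \<Rightarrow> fword set" where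
  "pres_kernel n m r a = normal_closure (free_group n) (pres_relators n m r a)"

definition pres_group :: "nat \<Rightarrow> nat \<Rightarrow> (nat \<Rightarrow> fword) \<Rightarrow> (nat \<Rightarrow> nat) \<Rightarrow> fword set monoid" where
  "pres_group n m r a = free_group n Mod pres_kernel n m r a"

definition pres_map :: "nat \<Rightarrow> nat \<Rightarrow> (nat \<Rightarrow> fword) \<Rightarrow> (nat \<Rightarrow> nat) \<Rightarrow> fword \<Rightarrow> fword set" where
  "pres_map n m r a w = pres_kernel n m r a #>\<^bsub>free_group n\<^esub> w"

definition proper_power :: "('a, 'b) monoid_scheme \<Rightarrow> 'a \<Rightarrow> bool" where
  "proper_power G x \<longleftrightarrow> (\<exists>s \<in> carrier G. \<exists>k::nat. k \<ge> 2 \<and> x = s [^]\<^bsub>G\<^esub> k)"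

definition finite_index_subgroup :: "('a, 'b) monoid_scheme \<Rightarrow> 'a set \<Rightarrow> bool" where
  "finite_index_subgroup G H \<longleftrightarrow> subgroup H G \<and> finite (rcosets\<^bsub>G\<^esub> H)"

definition finite_residual :: "('a, 'b) monoid_scheme \<Rightarrow> 'a set" where
  "finite_residual G = \<Inter> {H. finite_index_subgroup G H}"

definition residually_finite :: "('a, 'b) monoid_scheme \<Rightarrow> bool" where
  "residually_finite G \<longleftrightarrow> finite_residual G = {\<one>\<^bsub>G\<^esub>}"

text \<open>rdef(P) = n - sum_i 1/k_i, k_i the order of phi(r_i) R_G in G/R_G
  (an infinite order is represented by ord = 0, so 1/k_i = 0 then).\<close>
definition rdef :: "nat \<Rightarrow> nat \<Rightarrow> (nat \<Rightarrow> fword) \<Rightarrow> (nat \<Rightarrow> nat) \<Rightarrow> real" where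
  "rdef n m r a =
     (let G = pres_group n m r a; R = finite_residual G
      in real n - (\<Sum>i<m. 1 / real (group.ord (G Mod R) (R #>\<^bsub>G\<^esub> pres_map n m r a (r i)))))"

end

theory Submission
  imports Defs
begin

definition cstep :: "nat \<times> bool \<Rightarrow> fword \<Rightarrow> fword" where
  "cstep a v = (case v of [] \<Rightarrow> [a] | b # u \<Rightarrow> if b = inv_letter a then u else a # b # u)"

lemma red_Cons: "red (a # w) = cstep a (red w)"
  by (simp add: cstep_def)

lemma inv_inv[simp]: "inv_letter (inv_letter a) = a"
  by (cases a) (simp add: inv_letter_def)

lemma reduced_tl: "reduced (b # u) \<Longrightarrow> reduced u"
  by (cases u) auto

lemma reduced_cstep: "reduced v \<Longrightarrow> reduced (cstep a v)"
  by (cases v) (auto simp: cstep_def dest: reduced_tl)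

lemma reduced_red: "reduced (red w)"
  by (induction w) (auto simp: red_Cons reduced_cstep simp del: red.simps(2))

lemma red_reduced: "reduced w \<Longrightarrow> red w = w"
  by (induction w rule: reduced.induct) (auto simp: red_Cons cstep_def simp del: red.simps(2))

lemma cstep_cancel: "reduced z \<Longrightarrow> cstep a (cstep (inv_letter a) z) = z"
  apply (cases z)
   apply (simp add: cstep_def)
  subgoal for b u
    apply (cases u)
     apply (auto simp: cstep_def)
    done
  done

lemma red_append_red: "red (u @ red v) = red (u @ v)"
  by (induction u) (auto simp: red_Cons red_reduced reduced_red simp del: red.simps(2))

lemma red_cstep_append: "reduced w \<Longrightarrow> red (cstep a w @ v) = cstep a (red (w @ v))"
proof (cases w)
  case Nil
  have "cstep a w = [a]" using Nil by (simp add: cstep_def)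
  then show ?thesis using Nil by (simp only: append_Cons append_Nil red_Cons)
next
  case (Cons b w')
  show ?thesis
  proof (cases "b = inv_letter a")
    case True
    have "cstep a w = w'" using Cons True by (simp add: cstep_def)
    moreover have "red (w @ v) = cstep (inv_letter a) (red (w' @ v))"
      using Cons True by (simp only: append_Cons red_Cons)
    ultimately show ?thesis by (simp only: cstep_cancel[OF reduced_red])
  next
    case False
    have "cstep a w = a # w" using Cons False by (simp add: cstep_def)
    then show ?thesis by (simp only: append_Cons red_Cons)
  qed
qed

lemma red_red_append: "red (red u @ v) = red (u @ v)"
proof (induction u)
  case Nil then show ?case by simp
next
  case (Cons a u)
  have "red (red (a # u) @ v) = red (cstep a (red u) @ v)" by (simp only: red_Cons)
  also have "\<dots> = cstep a (red (red u @ v))" by (rule red_cstep_append[OF reduced_red])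
  also have "\<dots> = red ((a # u) @ v)" using Cons by (simp only: red_Cons append_Cons)
  finally show ?case .
qed

lemma set_cstep: "set (cstep a v) \<subseteq> insert a (set v)"
  by (cases v) (auto simp: cstep_def)

lemma set_red: "set (red w) \<subseteq> set w"
  apply (induction w)
   apply simp
  apply (simp only: red_Cons)
  using set_cstep by fastforce

definition winv :: "fword \<Rightarrow> fword" where "winv w = rev (map inv_letter w)"

lemma red_winv: "red (winv w @ w) = []"
proof (induction w)
  case Nil then show ?case by (simp add: winv_def)
next
  case (Cons a w)
  have e: "red (inv_letter a # a # w) = red w"
    using cstep_cancel[OF reduced_red, of "inv_letter a" w] by (simp only: red_Cons inv_inv)
  have "red (winv (a # w) @ a # w) = red (winv w @ (inv_letter a # a # w))"
    by (simp add: winv_def)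
  also have "\<dots> = red (winv w @ red (inv_letter a # a # w))" by (simp only: red_append_red)
  also have "\<dots> = red (winv w @ w)" by (simp only: e red_append_red)
  finally show ?case using Cons by simp
qed

lemma free_group_is_group: "group (free_group n)"
proof (rule groupI)
  let ?F = "free_group n"
  have car: "\<And>w. w \<in> carrier ?F \<longleftrightarrow> set w \<subseteq> {..<n} \<times> UNIV \<and> reduced w"
    by (simp add: free_group_def)
  have mul: "\<And>u v. u \<otimes>\<^bsub>?F\<^esub> v = red (u @ v)" by (simp add: free_group_def)
  have one: "\<one>\<^bsub>?F\<^esub> = []" by (simp add: free_group_def)
  show "\<And>x y. x \<in> carrier ?F \<Longrightarrow> y \<in> carrier ?F \<Longrightarrow> x \<otimes>\<^bsub>?F\<^esub> y \<in> carrier ?F"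
    unfolding car mul using set_red reduced_red by fastforce
  show "\<one>\<^bsub>?F\<^esub> \<in> carrier ?F" unfolding car one by simp
  show "\<And>x y z. x \<in> carrier ?F \<Longrightarrow> y \<in> carrier ?F \<Longrightarrow> z \<in> carrier ?F \<Longrightarrow>
      x \<otimes>\<^bsub>?F\<^esub> y \<otimes>\<^bsub>?F\<^esub> z = x \<otimes>\<^bsub>?F\<^esub> (y \<otimes>\<^bsub>?F\<^esub> z)"
    unfolding mul by (metis append_assoc red_append_red red_red_append)
  show "\<And>x. x \<in> carrier ?F \<Longrightarrow> \<one>\<^bsub>?F\<^esub> \<otimes>\<^bsub>?F\<^esub> x = x"
    unfolding mul one car by (simp add: red_reduced)
  show "\<exists>y\<in>carrier ?F. y \<otimes>\<^bsub>?F\<^esub> x = \<one>\<^bsub>?F\<^esub>" if x: "x \<in> carrier ?F" for x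
  proof (intro bexI)
    show "red (winv x) \<otimes>\<^bsub>?F\<^esub> x = \<one>\<^bsub>?F\<^esub>" unfolding mul one
      by (simp add: red_red_append red_winv)
    have "set (winv x) \<subseteq> {..<n} \<times> UNIV" using x unfolding car winv_def
      by (auto simp: inv_letter_def)
    then show "red (winv x) \<in> carrier ?F" unfolding car using set_red reduced_red by blast
  qed
qed


lemma coset_eq_iff:
  assumes G: "group G" and S: "subgroup S G" and x: "x \<in> carrier G" and y: "y \<in> carrier G"
  shows "(S #>\<^bsub>G\<^esub> x = S #>\<^bsub>G\<^esub> y) \<longleftrightarrow> x \<otimes>\<^bsub>G\<^esub> inv\<^bsub>G\<^esub> y \<in> S"
proof
  assume e: "S #>\<^bsub>G\<^esub> x = S #>\<^bsub>G\<^esub> y"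
  have "x \<in> S #>\<^bsub>G\<^esub> y" using group.rcos_self[OF G x S] e by simp
  then show "x \<otimes>\<^bsub>G\<^esub> inv\<^bsub>G\<^esub> y \<in> S" using subgroup.rcos_module_imp[OF S G y] by blast
next
  assume "x \<otimes>\<^bsub>G\<^esub> inv\<^bsub>G\<^esub> y \<in> S"
  then have "x \<in> S #>\<^bsub>G\<^esub> y" using subgroup.rcos_module_rev[OF S G y x] by blast
  then show "S #>\<^bsub>G\<^esub> x = S #>\<^bsub>G\<^esub> y" using group.repr_independence[OF G _ y S] by simp
qed

lemma finite_image_eqv:
  assumes "\<And>x y. x \<in> A \<Longrightarrow> y \<in> A \<Longrightarrow> (h x = h y \<longleftrightarrow> g x = g y)" and "finite (g ` A)"
  shows "finite (h ` A)"
proof -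
  have "h ` A \<subseteq> (\<lambda>C. h (SOME x. x \<in> A \<and> g x = C)) ` (g ` A)"
  proof
    fix z assume "z \<in> h ` A"
    then obtain x where x: "x \<in> A" "z = h x" by blast
    let ?x = "SOME x'. x' \<in> A \<and> g x' = g x"
    have "?x \<in> A \<and> g ?x = g x" by (rule someI[of _ x]) (use x in auto)
    then have "h ?x = h x" using assms(1) x by blast
    then show "z \<in> (\<lambda>C. h (SOME x. x \<in> A \<and> g x = C)) ` (g ` A)" using x by force
  qed
  then show ?thesis using assms(2) finite_subset by blast
qed

lemma fi_preimage:
  assumes G: "group G" and N: "group N" and f: "f \<in> hom G N"
    and H: "finite_index_subgroup N H"
  shows "finite_index_subgroup G {x \<in> carrier G. f x \<in> H}"
proof -
  interpret gh: group_hom G N f using G N f by (simp add: group_hom_def group_hom_axioms_def)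
  let ?P = "{x \<in> carrier G. f x \<in> H}"
  have sH: "subgroup H N" and fH: "finite (rcosets\<^bsub>N\<^esub> H)"
    using H unfolding finite_index_subgroup_def by auto
  have sP: "subgroup ?P G"
  proof (rule group.subgroupI[OF G])
    show "?P \<subseteq> carrier G" by auto
    show "?P \<noteq> {}" using subgroup.one_closed[OF sH] by (auto intro!: exI[of _ "\<one>\<^bsub>G\<^esub>"])
    show "inv\<^bsub>G\<^esub> x \<in> ?P" if "x \<in> ?P" for x
      using that subgroup.m_inv_closed[OF sH] by auto
    show "x \<otimes>\<^bsub>G\<^esub> y \<in> ?P" if "x \<in> ?P" "y \<in> ?P" for x y
      using that subgroup.m_closed[OF sH] by auto
  qed
  have key: "(?P #>\<^bsub>G\<^esub> x = ?P #>\<^bsub>G\<^esub> y) \<longleftrightarrow> (H #>\<^bsub>N\<^esub> f x = H #>\<^bsub>N\<^esub> f y)"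
    if x: "x \<in> carrier G" and y: "y \<in> carrier G" for x y
    using coset_eq_iff[OF G sP x y] coset_eq_iff[OF N sH gh.hom_closed[OF x] gh.hom_closed[OF y]] x y
    by auto
  have e: "rcosets\<^bsub>G\<^esub> ?P = (\<lambda>x. ?P #>\<^bsub>G\<^esub> x) ` carrier G"
    by (auto simp: RCOSETS_def)
  have "(\<lambda>x. H #>\<^bsub>N\<^esub> f x) ` carrier G \<subseteq> rcosets\<^bsub>N\<^esub> H"
    unfolding RCOSETS_def using gh.hom_closed by blast
  then have "finite ((\<lambda>x. H #>\<^bsub>N\<^esub> f x) ` carrier G)" using fH finite_subset by blast
  then have "finite ((\<lambda>x. ?P #>\<^bsub>G\<^esub> x) ` carrier G)"
    by (rule finite_image_eqv[rotated]) (use key in blast)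
  then show ?thesis using sP e unfolding finite_index_subgroup_def by simp
qed

lemma conj_hom:
  fixes G (structure)
  assumes G: "group G" and g: "g \<in> carrier G"
  shows "(\<lambda>y. g \<otimes>\<^bsub>G\<^esub> y \<otimes>\<^bsub>G\<^esub> inv\<^bsub>G\<^esub> g) \<in> hom G G"
proof -
  interpret group G by (rule G)
  have c: "\<And>w. w \<in> carrier G \<Longrightarrow> inv g \<otimes> (g \<otimes> w) = w"
    using g by (simp add: m_assoc[symmetric])
  show ?thesis
    unfolding hom_def using g by (auto simp: m_assoc c)
qed

lemma finite_index_self:
  fixes G (structure)
  assumes G: "group G"
  shows "finite_index_subgroup G (carrier G)"
proof -
  interpret group G by (rule G)
  have "rcosets (carrier G) = {carrier G}"
    using subgroup_self coset_join2 by (auto simp: RCOSETS_def)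
  then show ?thesis unfolding finite_index_subgroup_def using subgroup_self by simp
qed

lemma finite_residual_normal:
  fixes G (structure)
  assumes G: "group G"
  shows "finite_residual G \<lhd> G"
proof -
  interpret group G by (rule G)
  have sub: "subgroup (finite_residual G) G"
    unfolding finite_residual_def
    by (rule subgroups_Inter) (auto simp: finite_index_subgroup_def intro: finite_index_self[OF G, unfolded finite_index_subgroup_def, THEN conjunct2] subgroup_self)
  show ?thesis
  proof (rule normal_invI[OF sub])
    fix x h assume x: "x \<in> carrier G" and h: "h \<in> finite_residual G"
    have hc: "h \<in> carrier G" using h sub subgroup.subset by blast
    show "x \<otimes> h \<otimes> inv x \<in> finite_residual G"
      unfolding finite_residual_def
    proof
      fix H assume "H \<in> {H. finite_index_subgroup G H}"
      then have "finite_index_subgroup G {y \<in> carrier G. x \<otimes> y \<otimes> inv x \<in> H}"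
        using fi_preimage[OF G G conj_hom[OF G x]] by blast
      then have "h \<in> {y \<in> carrier G. x \<otimes> y \<otimes> inv x \<in> H}"
        using h unfolding finite_residual_def by blast
      then show "x \<otimes> h \<otimes> inv x \<in> H" by simp
    qed
  qed
qed

theorem mainTheorem11:
  fixes n m :: nat
    and r :: "nat \<Rightarrow> fword"
    and a :: "nat \<Rightarrow> nat"
    and N :: "('c, 'd) monoid_scheme"
    and \<psi> :: "fword set \<Rightarrow> 'c"
  assumes r_in: "\<And>i. i < m \<Longrightarrow> r i \<in> carrier (free_group n)"
    and r_npp: "\<And>i. i < m \<Longrightarrow> \<not> proper_power (free_group n) (r i)"
    and a_pos: "\<And>i. i < m \<Longrightarrow> a i \<ge> 1"
    and N_grp: "group N"
    and N_rf: "residually_finite N"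
    and \<psi>_hom: "\<psi> \<in> hom (pres_group n m r a) N"
    and ord_eq: "\<And>i. i < m \<Longrightarrow> group.ord N (\<psi> (pres_map n m r a (r i))) = a i"
  shows "rdef n m r a = real n - (\<Sum>i<m. 1 / real (a i))"
proof -
  define F where "F = free_group n"
  define K where "K = pres_kernel n m r a"
  define G where "G = pres_group n m r a"
  define R where "R = finite_residual G"
  have gF: "group F" unfolding F_def by (rule free_group_is_group)
  interpret F: group F by (rule gF)
  have relsub: "pres_relators n m r a \<subseteq> carrier F"
    unfolding pres_relators_def F_def using r_in
    by (auto intro: monoid.nat_pow_closed[OF group.is_monoid[OF free_group_is_group]])
  have Kn: "K \<lhd> F"
    unfolding K_def pres_kernel_def normal_closure_def F_def[symmetric]
  proof (rule F.normal_generateI)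
    show "{g \<otimes>\<^bsub>F\<^esub> s \<otimes>\<^bsub>F\<^esub> inv\<^bsub>F\<^esub> g |g s. g \<in> carrier F \<and> s \<in> pres_relators n m r a} \<subseteq> carrier F"
      using relsub by auto
    fix h g assume h: "h \<in> {g \<otimes>\<^bsub>F\<^esub> s \<otimes>\<^bsub>F\<^esub> inv\<^bsub>F\<^esub> g |g s. g \<in> carrier F \<and> s \<in> pres_relators n m r a}"
      and g: "g \<in> carrier F"
    then obtain g' s where gs: "h = g' \<otimes>\<^bsub>F\<^esub> s \<otimes>\<^bsub>F\<^esub> inv\<^bsub>F\<^esub> g'" "g' \<in> carrier F" "s \<in> pres_relators n m r a"
      by blast
    have sc: "s \<in> carrier F" using gs relsub by blast
    have "g \<otimes>\<^bsub>F\<^esub> h \<otimes>\<^bsub>F\<^esub> inv\<^bsub>F\<^esub> g = (g \<otimes>\<^bsub>F\<^esub> g') \<otimes>\<^bsub>F\<^esub> s \<otimes>\<^bsub>F\<^esub> inv\<^bsub>F\<^esub> (g \<otimes>\<^bsub>F\<^esub> g')"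
      using gs sc g by (simp add: F.m_assoc F.inv_mult_group)
    then show "g \<otimes>\<^bsub>F\<^esub> h \<otimes>\<^bsub>F\<^esub> inv\<^bsub>F\<^esub> g \<in> {g \<otimes>\<^bsub>F\<^esub> s \<otimes>\<^bsub>F\<^esub> inv\<^bsub>F\<^esub> g |g s. g \<in> carrier F \<and> s \<in> pres_relators n m r a}"
      using gs g by blast
  qed
  have GFK: "G = F Mod K" unfolding G_def pres_group_def F_def K_def ..
  have gG: "group G" unfolding GFK by (rule normal.factorgroup_is_group[OF Kn])
  interpret G: group G by (rule gG)
  have Rn: "R \<lhd> G" unfolding R_def by (rule finite_residual_normal[OF gG])
  have sR: "subgroup R G" using Rn normal_imp_subgroup by blast
  have gGR: "group (G Mod R)" by (rule normal.factorgroup_is_group[OF Rn])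
  interpret N: group N by (rule N_grp)
  have psiR: "\<psi> x = \<one>\<^bsub>N\<^esub>" if x: "x \<in> R" for x
  proof -
    have "\<psi> x \<in> finite_residual N"
      unfolding finite_residual_def
    proof
      fix H assume "H \<in> {H. finite_index_subgroup N H}"
      then have "finite_index_subgroup G {y \<in> carrier G. \<psi> y \<in> H}"
        using fi_preimage[OF gG N_grp] \<psi>_hom unfolding G_def by blast
      then show "\<psi> x \<in> H" using x unfolding R_def finite_residual_def by blast
    qed
    then show ?thesis using N_rf unfolding residually_finite_def by blast
  qed
  interpret gh: group_hom G N \<psi> using gG N_grp \<psi>_hom
    by (simp add: group_hom_def group_hom_axioms_def G_def)
  have ordi: "group.ord (G Mod R) (R #>\<^bsub>G\<^esub> pres_map n m r a (r i)) = a i" if i: "i < m" for i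
  proof -
    define x where "x = pres_map n m r a (r i)"
    have ri: "r i \<in> carrier F" using r_in i F_def by blast
    have xK: "x = K #>\<^bsub>F\<^esub> r i" unfolding x_def pres_map_def K_def F_def ..
    have xc: "x \<in> carrier G" unfolding xK GFK FactGroup_def using ri
      by (simp add: F.rcosetsI normal_imp_subgroup[OF Kn] subgroup.subset)
    have raK: "r i [^]\<^bsub>F\<^esub> a i \<in> K"
    proof -
      have "r i [^]\<^bsub>F\<^esub> a i \<in> pres_relators n m r a" unfolding pres_relators_def F_def using i by blast
      then have "\<one>\<^bsub>F\<^esub> \<otimes>\<^bsub>F\<^esub> (r i [^]\<^bsub>F\<^esub> a i) \<otimes>\<^bsub>F\<^esub> inv\<^bsub>F\<^esub> \<one>\<^bsub>F\<^esub>
          \<in> {g \<otimes>\<^bsub>F\<^esub> s \<otimes>\<^bsub>F\<^esub> inv\<^bsub>F\<^esub> g |g s. g \<in> carrier F \<and> s \<in> pres_relators n m r a}"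
        by blast
      moreover have "\<one>\<^bsub>F\<^esub> \<otimes>\<^bsub>F\<^esub> (r i [^]\<^bsub>F\<^esub> a i) \<otimes>\<^bsub>F\<^esub> inv\<^bsub>F\<^esub> \<one>\<^bsub>F\<^esub> = r i [^]\<^bsub>F\<^esub> a i"
        using ri by simp
      ultimately show ?thesis unfolding K_def pres_kernel_def normal_closure_def F_def
        by (metis (no_types, lifting) generate.incl)
    qed
    have xa: "x [^]\<^bsub>G\<^esub> a i = \<one>\<^bsub>G\<^esub>"
    proof -
      have "x [^]\<^bsub>G\<^esub> a i = K #>\<^bsub>F\<^esub> (r i [^]\<^bsub>F\<^esub> a i)"
        unfolding xK GFK using normal.FactGroup_pow[OF Kn ri] by simp
      also have "\<dots> = K" using F.coset_join2[OF _ normal_imp_subgroup[OF Kn] raK] ri by simp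
      finally show ?thesis unfolding GFK by (simp add: FactGroup_def)
    qed
    have pk: "(R #>\<^bsub>G\<^esub> x) [^]\<^bsub>G Mod R\<^esub> k = \<one>\<^bsub>G Mod R\<^esub> \<longleftrightarrow> a i dvd k" for k
    proof -
      have xk: "x [^]\<^bsub>G\<^esub> k \<in> carrier G" using xc by simp
      have "(R #>\<^bsub>G\<^esub> x) [^]\<^bsub>G Mod R\<^esub> k = R #>\<^bsub>G\<^esub> (x [^]\<^bsub>G\<^esub> k)"
        using normal.FactGroup_pow[OF Rn xc] by simp
      moreover have "\<one>\<^bsub>G Mod R\<^esub> = R" by (simp add: FactGroup_def)
      moreover have "R #>\<^bsub>G\<^esub> (x [^]\<^bsub>G\<^esub> k) = R \<longleftrightarrow> x [^]\<^bsub>G\<^esub> k \<in> R"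
        using G.coset_join1[OF _ xk sR] G.coset_join2[OF xk sR] by blast
      moreover have "x [^]\<^bsub>G\<^esub> k \<in> R \<longleftrightarrow> a i dvd k"
      proof
        assume "x [^]\<^bsub>G\<^esub> k \<in> R"
        then have "\<psi> (x [^]\<^bsub>G\<^esub> k) = \<one>\<^bsub>N\<^esub>" by (rule psiR)
        then have "\<psi> x [^]\<^bsub>N\<^esub> k = \<one>\<^bsub>N\<^esub>" using gh.hom_nat_pow[OF xc] by simp
        then have "N.ord (\<psi> x) dvd k" using N.pow_eq_id[OF gh.hom_closed[OF xc]] by simp
        then show "a i dvd k" using ord_eq[OF i] unfolding x_def by simp
      next
        assume "a i dvd k"
        then obtain j where j: "k = a i * j" by blast
        have "x [^]\<^bsub>G\<^esub> k = (x [^]\<^bsub>G\<^esub> a i) [^]\<^bsub>G\<^esub> j" using G.nat_pow_pow[OF xc] j by simp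
        also have "\<dots> = \<one>\<^bsub>G\<^esub>" using xa by simp
        finally show "x [^]\<^bsub>G\<^esub> k \<in> R" using subgroup.one_closed[OF sR] by simp
      qed
      ultimately show ?thesis by simp
    qed
    have "R #>\<^bsub>G\<^esub> x \<in> carrier (G Mod R)"
      using xc by (simp add: FactGroup_def G.rcosetsI subgroup.subset[OF sR])
    then show ?thesis using group.ord_unique[OF gGR] pk unfolding x_def by blast
  qed
  show ?thesis
    unfolding rdef_def Let_def G_def[symmetric] R_def[symmetric]
    using ordi by (simp add: G_def R_def)
qed

end
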